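(* Let $h_{m,n}(x)=S_{(n^m)}(x,\tfrac16,0,0,\ldots)$ for integers $m,n\ge0$. Then for all $m,n\ge0$, $$\big(D_x^2-3xD_x+3m\big)h_{m,n+1}\cdot h_{m,n}=0,\quad \big(D_x^2-3xD_x+3(m-n)\big)h_{m,n+1}\cdot h_{m+1,n}=0,\quad \big(D_x^2-3xD_x-3n\big)h_{m,n}\cdot h_{m+1,n}=0.$$
   Context: $(n^m)$ is the rectangular partition with $m$ parts equal to $n$. Schur functions: $S_\lambda(t)=\det(p_{\lambda_i-i+j}(t))_{1\le i,j\le l(\lambda)}$ with $\sum_{n\ge0}p_n(t)z^n=\exp(\sum_{k\ge1}t_kz^k)$, $p_n=0$ for $n<0$, $S_\emptyset=1$. Hirota operators: $D_xF\cdot G=F'G-FG'$, $D_x^2F\cdot G=F''G-2F'G'+FG''$. *)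

theory Defs
  imports "HOL-Analysis.Analysis" "HOL-Computational_Algebra.Formal_Power_Series"
    "Jordan_Normal_Form.Determinant"
begin

text \<open>Complete homogeneous-type polynomials p_n(t), defined by the generating function
  sum_n p_n(t) z^n = exp(sum_{k>=1} t_k z^k); t is the sequence of times (t 0 is unused).\<close>
definition ptimes :: "(nat \<Rightarrow> real) \<Rightarrow> nat \<Rightarrow> real" where
  "ptimes t n = fps_nth (fps_compose (fps_exp 1) (Abs_fps (\<lambda>k. if k = 0 then 0 else t k))) n"

definition pint :: "(nat \<Rightarrow> real) \<Rightarrow> int \<Rightarrow> real" where
  "pint t k = (if k < 0 then 0 else ptimes t (nat k))"

text \<open>Schur function S_lambda(t) = det(p_{lambda_i - i + j}(t)), 1 <= i,j <= l(lambda);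
  a partition is a weakly decreasing list of positive parts (indices shifted to 0-based,
  which does not change lambda_i - i + j).\<close>
definition schur :: "nat list \<Rightarrow> (nat \<Rightarrow> real) \<Rightarrow> real" where
  "schur lam t = det (mat (length lam) (length lam)
      (\<lambda>(i, j). pint t (int (lam ! i) - int i + int j)))"

definition rect :: "nat \<Rightarrow> nat \<Rightarrow> nat list" where
  "rect n m = (if n = 0 then [] else replicate m n)"

definition hmn :: "nat \<Rightarrow> nat \<Rightarrow> real \<Rightarrow> real" where
  "hmn m n x = schur (rect n m) (\<lambda>k. if k = 1 then x else if k = 2 then 1/6 else 0)"

definition hirD :: "(real \<Rightarrow> real) \<Rightarrow> (real \<Rightarrow> real) \<Rightarrow> real \<Rightarrow> real" where
  "hirD F G x = deriv F x * G x - F x * deriv G x"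

definition hirD2 :: "(real \<Rightarrow> real) \<Rightarrow> (real \<Rightarrow> real) \<Rightarrow> real \<Rightarrow> real" where
  "hirD2 F G x = deriv (deriv F) x * G x - 2 * deriv F x * deriv G x + F x * deriv (deriv G) x"

end

theory Submission
  imports Defs "Jordan_Normal_Form.Char_Poly"
begin

fun P :: "nat \<Rightarrow> real poly" where
  "P 0 = 1"
| "P (Suc 0) = [:0,1:]"
| "P (Suc (Suc n)) = Polynomial.smult (1 / (real n + 2)) ([:0,1:] * P (Suc n) + Polynomial.smult (1/3) (P n))"

definition Pi :: "int \<Rightarrow> real poly" where
  "Pi k = (if k < 0 then 0 else P (nat k))"

definition tt :: "real \<Rightarrow> nat \<Rightarrow> real" where
  "tt x = (\<lambda>k. if k = 1 then x else if k = 2 then 1/6 else 0)"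

lemma ptimes_rec:
  "real (n+2) * ptimes (tt x) (n+2) = x * ptimes (tt x) (n+1) + (1/3) * ptimes (tt x) n"
proof -
  define B :: "real fps" where "B = Abs_fps (\<lambda>k. if k = 0 then 0 else tt x k)"
  define E where "E = fps_compose (fps_exp 1) B"
  have B0: "fps_nth B 0 = 0" by (simp add: B_def)
  have dE: "fps_deriv E = E * fps_deriv B"
    unfolding E_def by (simp add: fps_compose_deriv[OF B0] fps_compose_mult_distrib)
  have dB: "fps_nth (fps_deriv B) k = (if k = 0 then x else if k = 1 then 1/3 else 0)" for k
    by (simp add: B_def tt_def)
  have "fps_nth (fps_deriv E) (n+1) = fps_nth (E * fps_deriv B) (n+1)" by (simp add: dE)
  also have "\<dots> = (\<Sum>i=0..n+1. fps_nth E i * fps_nth (fps_deriv B) (n + 1 - i))" by (simp add: fps_mult_nth)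
  also have "\<dots> = (\<Sum>i\<in>{n, n+1}. fps_nth E i * fps_nth (fps_deriv B) (n + 1 - i))"
    by (rule sum.mono_neutral_right) (auto simp: B_def tt_def)
  also have "\<dots> = x * fps_nth E (n+1) + (1/3) * fps_nth E n" by (simp add: B_def tt_def)
  finally have "real (n+2) * fps_nth E (n+2) = x * fps_nth E (n+1) + (1/3) * fps_nth E n"
    by (simp add: add.commute)
  then show ?thesis by (simp add: ptimes_def E_def B_def)
qed

lemma ptimes_0: "ptimes (tt x) 0 = 1"
  by (simp add: ptimes_def)

lemma ptimes_1: "ptimes (tt x) 1 = x"
proof -
  have "ptimes (tt x) 1 = fps_nth (fps_compose (fps_exp 1) (Abs_fps (\<lambda>k. if k = 0 then 0 else tt x k))) 1"
    by (simp add: ptimes_def)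
  also have "\<dots> = x" by (simp add: fps_compose_nth tt_def)
  finally show ?thesis .
qed

lemma poly_P: "poly (P n) x = ptimes (tt x) n"
proof (induction n rule: P.induct)
  case 1 then show ?case by (simp add: ptimes_0)
next
  case 2 then show ?case using ptimes_1[of x] by simp
next
  case (3 n)
  have "real (n+2) * ptimes (tt x) (n+2) = x * ptimes (tt x) (n+1) + (1/3) * ptimes (tt x) n"
    by (rule ptimes_rec)
  then have "ptimes (tt x) (n+2) = (x * ptimes (tt x) (n+1) + (1/3) * ptimes (tt x) n) / (real n + 2)"
    by (simp add: field_simps)
  then show ?case using 3 by (simp add: field_simps)
qed

lemma Pi_neg[simp]: "k < 0 \<Longrightarrow> Pi k = 0" by (simp add: Pi_def)

lemma Pi_rec: "Polynomial.smult (of_int k) (Pi k) = [:0,1:] * Pi (k-1) + Polynomial.smult (1/3) (Pi (k-2))"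
proof (cases "k < 2")
  case True
  then consider "k < 0" | "k = 0" | "k = 1" by linarith
  then show ?thesis by cases (auto simp: Pi_def)
next
  case False
  then obtain n where n: "k = int n + 2" by (metis add.commute le_add_diff_inverse not_less of_nat_numeral zle_iff_zadd)
  have a: "nat (int n + 2) = Suc (Suc n)" "nat (int n + 2 - 1) = Suc n" "nat (int n + 2 - 2) = n" by auto
  show ?thesis unfolding n Pi_def using a by (simp add: algebra_simps)
qed

lemma pderiv_Pi: "pderiv (Pi k) = Pi (k-1)"
proof (cases "k < 0")
  case True then show ?thesis by simp
next
  case False
  then obtain n where n: "k = int n" by (metis nonneg_int_cases not_less)
  have "pderiv (Pi (int n)) = Pi (int n - 1)"
  proof (induction n rule: less_induct)
    case (less n)
    show ?case
    proof (cases "n < 2")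
      case True
      then consider "n = 0" | "n = 1" by linarith
      then show ?thesis by cases (auto simp: Pi_def pderiv_pCons)
    next
      case False
      then obtain j where j: "n = j + 2" by (metis add.commute le_add_diff_inverse not_less)
      have ih1: "pderiv (Pi (int j + 1)) = Pi (int j)" using less[of "j+1"] j by (simp add: add.commute)
      have ih1': "pderiv (Pi (1 + int j)) = Pi (int j)" using ih1 by (simp add: add.commute)
      have ih2: "pderiv (Pi (int j)) = Pi (int j - 1)" using less[of "j"] j by simp
      have r2: "Polynomial.smult (of_int (int j + 2)) (Pi (int j + 2)) = [:0,1:] * Pi (int j + 1) + Polynomial.smult (1/3) (Pi (int j))"
        using Pi_rec[of "int j + 2"] by (simp add: algebra_simps)
      have r1: "Polynomial.smult (of_int (int j + 1)) (Pi (int j + 1)) = [:0,1:] * Pi (int j) + Polynomial.smult (1/3) (Pi (int j - 1))"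
        using Pi_rec[of "int j + 1"] by (simp add: algebra_simps)
      have "Polynomial.smult (of_int (int j + 2)) (pderiv (Pi (int j + 2))) = pderiv ([:0,1:] * Pi (int j + 1) + Polynomial.smult (1/3) (Pi (int j)))"
        by (metis pderiv_smult r2)
      also have "\<dots> = Pi (int j + 1) + [:0,1:] * Pi (int j) + Polynomial.smult (1/3) (Pi (int j - 1))"
        by (simp add: pderiv_mult pderiv_add pderiv_smult ih1 ih1' ih2 pderiv_pCons algebra_simps)
      also have "\<dots> = Pi (int j + 1) + Polynomial.smult (of_int (int j + 1)) (Pi (int j + 1))"
        using r1 by (simp add: add.assoc)
      also have "\<dots> = Polynomial.smult (1 + of_int (int j + 1)) (Pi (int j + 1))"
        by (simp only: smult_add_left) simp
      also have "\<dots> = Polynomial.smult (of_int (int j + 2)) (Pi (int j + 1))"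
        by (simp add: add.commute)
      finally have "Polynomial.smult (of_int (int j + 2)) (pderiv (Pi (int j + 2))) = Polynomial.smult (of_int (int j + 2)) (Pi (int j + 1))" .
      then have fin: "pderiv (Pi (int j + 2)) = Pi (int j + 1)"
        using smult_cancel[of "real_of_int (int j + 2)"] by simp
      have e: "int n = int j + 2" "int j + 2 - 1 = int j + 1" using j by auto
      show ?thesis unfolding e by (rule fin)
    qed
  qed
  then show ?thesis using n by simp
qed

definition rowrep :: "'a mat \<Rightarrow> nat \<Rightarrow> (nat \<Rightarrow> nat \<Rightarrow> 'a) \<Rightarrow> 'a mat" where
  "rowrep A i B = mat (dim_row A) (dim_col A) (\<lambda>(r,j). if r = i then B r j else A $$ (r,j))"

definition RS :: "nat \<Rightarrow> 'a::comm_ring_1 mat \<Rightarrow> (nat \<Rightarrow> nat \<Rightarrow> 'a) \<Rightarrow> 'a" where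
  "RS n A B = (\<Sum>i\<in>{0..<n}. det (rowrep A i B))"

lemma RS_formula:
  fixes A :: "'a::comm_ring_1 mat"
  assumes A: "A \<in> carrier_mat n n"
  shows "RS n A B = (\<Sum>p\<in>{p. p permutes {0..<n}}. signof p *
            (\<Sum>i\<in>{0..<n}. B i (p i) * (\<Prod>l\<in>{0..<n}-{i}. A $$ (l, p l))))"
proof -
  have "det (rowrep A i B) = (\<Sum>p\<in>{p. p permutes {0..<n}}. signof p *
            (B i (p i) * (\<Prod>l\<in>{0..<n}-{i}. A $$ (l, p l))))" if i: "i < n" for i
  proof -
    have R: "rowrep A i B \<in> carrier_mat n n" using A by (simp add: rowrep_def)
    show ?thesis unfolding det_def'[OF R]
    proof (rule sum.cong[OF refl])
      fix p assume "p \<in> {p. p permutes {0..<n}}"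
      then have p: "p permutes {0..<n}" by simp
      have pl: "l < n \<Longrightarrow> p l < n" for l using p by (simp add: permutes_in_image)
      have "(\<Prod>l = 0..<n. rowrep A i B $$ (l, p l)) = rowrep A i B $$ (i, p i) * (\<Prod>l\<in>{0..<n}-{i}. rowrep A i B $$ (l, p l))"
        by (rule prod.remove) (use i in auto)
      also have "\<dots> = B i (p i) * (\<Prod>l\<in>{0..<n}-{i}. A $$ (l, p l))"
        using A i pl by (auto simp: rowrep_def intro!: prod.cong)
      finally show "signof p * (\<Prod>l = 0..<n. rowrep A i B $$ (l, p l)) = signof p * (B i (p i) * (\<Prod>l\<in>{0..<n}-{i}. A $$ (l, p l)))"
        by simp
    qed
  qed
  then have "RS n A B = (\<Sum>i\<in>{0..<n}. \<Sum>p\<in>{p. p permutes {0..<n}}. signof p *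
            (B i (p i) * (\<Prod>l\<in>{0..<n}-{i}. A $$ (l, p l))))"
    unfolding RS_def by (intro sum.cong) auto
  also have "\<dots> = (\<Sum>p\<in>{p. p permutes {0..<n}}. \<Sum>i\<in>{0..<n}. signof p *
            (B i (p i) * (\<Prod>l\<in>{0..<n}-{i}. A $$ (l, p l))))"
    by (rule sum.swap)
  also have "\<dots> = (\<Sum>p\<in>{p. p permutes {0..<n}}. signof p *
            (\<Sum>i\<in>{0..<n}. B i (p i) * (\<Prod>l\<in>{0..<n}-{i}. A $$ (l, p l))))"
    by (simp add: sum_distrib_left)
  finally show ?thesis .
qed

lemma RS_add:
  fixes A :: "'a::comm_ring_1 mat"
  assumes A: "A \<in> carrier_mat n n"
  shows "RS n A (\<lambda>i j. B1 i j + B2 i j) = RS n A B1 + RS n A B2"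
  unfolding RS_formula[OF A] by (simp add: distrib_left distrib_right sum.distrib)

lemma RS_scal:
  fixes A :: "'a::comm_ring_1 mat"
  assumes A: "A \<in> carrier_mat n n"
  shows "RS n A (\<lambda>i j. c * B i j) = c * RS n A B"
  unfolding RS_formula[OF A] by (simp add: sum_distrib_left mult.assoc mult.left_commute)

lemma RS_mult_entry:
  fixes A :: "'a::comm_ring_1 mat"
  assumes A: "A \<in> carrier_mat n n"
  shows "RS n A (\<lambda>i j. f i j * A $$ (i,j)) =
     (\<Sum>p\<in>{p. p permutes {0..<n}}. signof p * ((\<Sum>i\<in>{0..<n}. f i (p i)) * (\<Prod>l\<in>{0..<n}. A $$ (l, p l))))"
proof -
  have "(\<Sum>i\<in>{0..<n}. f i (p i) * A $$ (i, p i) * (\<Prod>l\<in>{0..<n}-{i}. A $$ (l, p l)))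
        = (\<Sum>i\<in>{0..<n}. f i (p i)) * (\<Prod>l\<in>{0..<n}. A $$ (l, p l))" for p
  proof -
    have "f i (p i) * A $$ (i, p i) * (\<Prod>l\<in>{0..<n}-{i}. A $$ (l, p l)) = f i (p i) * (\<Prod>l\<in>{0..<n}. A $$ (l, p l))"
      if "i \<in> {0..<n}" for i
      using prod.remove[of "{0..<n}" i "\<lambda>l. A $$ (l, p l)"] that by (simp add: mult.assoc)
    then show ?thesis by (simp add: sum_distrib_right)
  qed
  then show ?thesis unfolding RS_formula[OF A] by simp
qed

lemma RS_diag:
  fixes A :: "'a::comm_ring_1 mat"
  assumes A: "A \<in> carrier_mat n n"
  shows "RS n A (\<lambda>i j. c j * A $$ (i,j)) = (\<Sum>j\<in>{0..<n}. c j) * det A"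
proof -
  have "(\<Sum>i\<in>{0..<n}. c (p i)) = (\<Sum>j\<in>{0..<n}. c j)" if "p permutes {0..<n}" for p
    using sum.permute[OF that, of c] by (simp add: comp_def)
  then show ?thesis
    unfolding RS_mult_entry[OF A, of "\<lambda>i j. c j"] det_def'[OF A]
    by (simp add: sum_distrib_left mult.left_commute)
qed

lemma RS_rowscal:
  fixes A :: "'a::comm_ring_1 mat"
  assumes A: "A \<in> carrier_mat n n"
  shows "RS n A (\<lambda>i j. a i * A $$ (i,j)) = (\<Sum>i\<in>{0..<n}. a i) * det A"
  unfolding RS_mult_entry[OF A, of "\<lambda>i j. a i"] det_def'[OF A]
  by (simp add: sum_distrib_left mult.left_commute)

lemma pderiv_sum': "pderiv (sum f S) = (\<Sum>x\<in>S. pderiv (f x :: real poly))"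
  by (induction S rule: infinite_finite_induct) (auto simp: pderiv_add)

lemma pderiv_of_int': "pderiv (of_int k :: real poly) = 0"
  by (cases k rule: int_cases) (auto simp: pderiv_minus pderiv_diff)

lemma pderiv_signof: "pderiv (signof p * q) = signof p * pderiv (q :: real poly)"
  by (simp add: pderiv_mult pderiv_of_int')

lemma pderiv_det:
  fixes A :: "real poly mat"
  assumes A: "A \<in> carrier_mat n n"
  shows "pderiv (det A) = RS n A (\<lambda>i j. pderiv (A $$ (i,j)))"
proof -
  have "pderiv (det A) = (\<Sum>p\<in>{p. p permutes {0..<n}}. signof p * pderiv (\<Prod>l\<in>{0..<n}. A $$ (l, p l)))"
    unfolding det_def'[OF A] by (simp add: pderiv_sum' pderiv_signof)
  also have "\<dots> = RS n A (\<lambda>i j. pderiv (A $$ (i,j)))"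
    unfolding RS_formula[OF A] pderiv_prod by (simp add: mult.commute)
  finally show ?thesis .
qed

lemma det_2x2:
  fixes D :: "'a::comm_ring_1 mat"
  assumes D: "D \<in> carrier_mat 2 2"
  shows "det D = D $$ (0,0) * D $$ (1,1) - D $$ (0,1) * D $$ (1,0)"
proof -
  have c: "mat_delete D i 0 \<in> carrier_mat 1 1" for i using mat_delete_carrier[OF D] by simp
  have "det D = (\<Sum>i<2. D $$ (i,0) * cofactor D i 0)" by (rule laplace_expansion_column[OF D]) simp
  also have "\<dots> = D $$ (0,0) * cofactor D 0 0 + D $$ (1,0) * cofactor D 1 0"
    by (simp add: numeral_2_eq_2)
  also have "cofactor D 0 0 = D $$ (1,1)"
    unfolding cofactor_def det_single[OF c] using D by (simp add: mat_delete_def)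
  also have "cofactor D 1 0 = - D $$ (0,1)"
    unfolding cofactor_def det_single[OF c] using D by (simp add: mat_delete_def)
  finally show ?thesis by (simp add: algebra_simps)
qed

lemma DJ_nonzero:
  fixes M :: "'a::idom mat"
  assumes M: "M \<in> carrier_mat n n" and n: "n \<ge> 2" and nz: "det M \<noteq> 0"
  shows "det M * det (mat_delete (mat_delete M (n-1) (n-1)) (n-2) (n-2)) =
    det (mat_delete M (n-2) (n-2)) * det (mat_delete M (n-1) (n-1))
    - det (mat_delete M (n-2) (n-1)) * det (mat_delete M (n-1) (n-2))"
proof -
  define a where "a = n - 2"
  have na: "n = a + 2" using n a_def by simp
  define adj where "adj = adj_mat M"
  have adjc: "adj \<in> carrier_mat n n" and Madj: "M * adj = det M \<cdot>\<^sub>m 1\<^sub>m n"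
    using adj_mat[OF M] adj_def by auto
  define Q where "Q = mat n n (\<lambda>(i,j). if j < a then (if i = j then 1 else 0) else adj $$ (i,j))"
  have Qc: "Q \<in> carrier_mat n n" by (simp add: Q_def)
  define M11 where "M11 = mat a a (\<lambda>(i,j). M $$ (i,j))"
  define M21 where "M21 = mat 2 a (\<lambda>(i,j). M $$ (i+a,j))"
  define Q12 where "Q12 = mat a 2 (\<lambda>(i,j). adj $$ (i,j+a))"
  define D where "D = mat 2 2 (\<lambda>(i,j). adj $$ (i+a,j+a))"
  have MQ: "M * Q = four_block_mat M11 (0\<^sub>m a 2) M21 (det M \<cdot>\<^sub>m 1\<^sub>m 2)"
  proof (rule eq_matI)
    fix i j assume i: "i < dim_row (four_block_mat M11 (0\<^sub>m a 2) M21 (det M \<cdot>\<^sub>m 1\<^sub>m 2))"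
      and j: "j < dim_col (four_block_mat M11 (0\<^sub>m a 2) M21 (det M \<cdot>\<^sub>m 1\<^sub>m 2))"
    have i': "i < n" "j < n" using i j na by (auto simp: M11_def)
    show "(M * Q) $$ (i, j) = four_block_mat M11 (0\<^sub>m a 2) M21 (det M \<cdot>\<^sub>m 1\<^sub>m 2) $$ (i, j)"
    proof (cases "j < a")
      case True
      have "(M * Q) $$ (i, j) = (\<Sum>l = 0..<n. M $$ (i,l) * Q $$ (l,j))"
        using M Qc i' by (simp add: scalar_prod_def)
      also have "\<dots> = (\<Sum>l\<in>{j}. M $$ (i,l) * Q $$ (l,j))"
        by (rule sum.mono_neutral_right) (use True i' in \<open>auto simp: Q_def\<close>)
      also have "\<dots> = M $$ (i,j)" using True i' by (simp add: Q_def)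
      finally show ?thesis using True i' na by (simp add: four_block_mat_def M11_def M21_def)
    next
      case False
      have "(M * Q) $$ (i, j) = (\<Sum>l = 0..<n. M $$ (i,l) * Q $$ (l,j))"
        using M Qc i' by (simp add: scalar_prod_def)
      also have "\<dots> = (\<Sum>l = 0..<n. M $$ (i,l) * adj $$ (l,j))"
        using False i' by (intro sum.cong) (auto simp: Q_def)
      also have "\<dots> = (M * adj) $$ (i,j)"
        using M adjc i' by (simp add: scalar_prod_def)
      also have "\<dots> = (if i = j then det M else 0)" using Madj i' by simp
      finally show ?thesis using False i' na by (auto simp: four_block_mat_def M11_def M21_def)
    qed
  qed (use M in \<open>auto simp: M11_def Q_def na\<close>)
  have "det (M * Q) = det M11 * det (det M \<cdot>\<^sub>m 1\<^sub>m 2)"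
    unfolding MQ by (rule det_four_block_mat_upper_right_zero) (auto simp: M11_def M21_def)
  also have "\<dots> = det M11 * (det M)^2" by simp
  finally have e1: "det M * det Q = det M11 * (det M)^2"
    using det_mult[OF M Qc] by simp
  have Q4: "Q = four_block_mat (1\<^sub>m a) Q12 (0\<^sub>m 2 a) D"
    by (rule eq_matI) (auto simp: Q_def Q12_def D_def four_block_mat_def na)
  have "det Q = det (1\<^sub>m a :: 'a mat) * det D"
    unfolding Q4 by (rule det_four_block_mat_lower_left_zero) (auto simp: Q12_def D_def)
  then have e2: "det Q = det D" by simp
  have "det M * det D = det M * (det M * det M11)" using e1 e2 by (simp add: power2_eq_square algebra_simps)
  then have e3: "det D = det M * det M11" using nz by simp
  have Dc: "D \<in> carrier_mat 2 2" by (simp add: D_def)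
  have adjE: "adj $$ (i,j) = cofactor M j i" if "i < n" "j < n" for i j
    using that M by (simp add: adj_def adj_mat_def)
  have "det D = adj $$ (a,a) * adj $$ (a+1,a+1) - adj $$ (a,a+1) * adj $$ (a+1,a)"
    unfolding det_2x2[OF Dc] by (simp add: D_def add.commute)
  also have "\<dots> = det (mat_delete M a a) * det (mat_delete M (a+1) (a+1)) - det (mat_delete M a (a+1)) * det (mat_delete M (a+1) a)"
  proof -
    have s: "((-1::'a)^(a + (a+1))) * (-1)^(a+1+a) = 1"
      by (metis add.commute power_add power_one neg_one_even_power even_add)
    have "adj $$ (a,a+1) * adj $$ (a+1,a) = ((-1)^(a + (a+1)) * (-1)^(a+1+a)) * (det (mat_delete M (a+1) a) * det (mat_delete M a (a+1)))"
      using na by (simp add: adjE cofactor_def algebra_simps)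
    then show ?thesis using na s by (simp add: adjE cofactor_def mult.commute)
  qed
  finally have e4: "det D = det (mat_delete M a a) * det (mat_delete M (a+1) (a+1)) - det (mat_delete M a (a+1)) * det (mat_delete M (a+1) a)" .
  have M11e: "mat_delete (mat_delete M (n-1) (n-1)) (n-2) (n-2) = M11"
    by (rule eq_matI) (use M na in \<open>auto simp: mat_delete_def M11_def\<close>)
  have "n - 1 = a + 1" "n - 2 = a" using na by auto
  then show ?thesis unfolding M11e using e3 e4 by simp
qed

lemma map_mat_delete: "map_mat f (mat_delete A i j) = mat_delete (map_mat f A) i j"
  by (rule eq_matI) (auto simp: mat_delete_def)

lemma smult_mat_delete: "c \<cdot>\<^sub>m (mat_delete A i j) = mat_delete (c \<cdot>\<^sub>m A) i j"
  by (rule eq_matI) (auto simp: mat_delete_def)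

lemma DJ:
  fixes M :: "'a::idom mat"
  assumes M: "M \<in> carrier_mat n n" and n: "n \<ge> 2"
  shows "det M * det (mat_delete (mat_delete M (n-1) (n-1)) (n-2) (n-2)) =
    det (mat_delete M (n-2) (n-2)) * det (mat_delete M (n-1) (n-1))
    - det (mat_delete M (n-2) (n-1)) * det (mat_delete M (n-1) (n-2))"
proof -
  define CM where "CM = char_poly_matrix M"
  have CM: "CM \<in> carrier_mat n n" using M by (simp add: CM_def)
  have "coeff (char_poly M) n = 1" using degree_monic_char_poly[OF M] by simp
  then have nz: "det CM \<noteq> 0" by (auto simp: CM_def char_poly_def)
  note dj = DJ_nonzero[OF CM n nz]
  define h where "h = (\<lambda>p::'a poly. poly p 0)"
  have hom: "comm_ring_hom h" unfolding h_def by unfold_locales auto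
  have hC: "map_mat h CM = (-1) \<cdot>\<^sub>m M"
    by (rule eq_matI) (use M in \<open>auto simp: CM_def char_poly_matrix_def h_def\<close>)
  have key: "h (det (mat_delete CM i j)) = (-1)^(n-1) * det (mat_delete M i j)" for i j
  proof -
    have "h (det (mat_delete CM i j)) = det (map_mat h (mat_delete CM i j))"
      by (rule comm_ring_hom.hom_det[OF hom, symmetric])
    also have "\<dots> = det ((-1) \<cdot>\<^sub>m mat_delete M i j)"
      by (simp add: map_mat_delete hC smult_mat_delete)
    also have "\<dots> = (-1)^(n-1) * det (mat_delete M i j)" using M by simp
    finally show ?thesis .
  qed
  have key2: "h (det (mat_delete (mat_delete CM i j) k l)) = (-1)^(n-2) * det (mat_delete (mat_delete M i j) k l)" for i j k l
  proof -
    have "h (det (mat_delete (mat_delete CM i j) k l)) = det (map_mat h (mat_delete (mat_delete CM i j) k l))"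
      by (rule comm_ring_hom.hom_det[OF hom, symmetric])
    also have "\<dots> = det ((-1) \<cdot>\<^sub>m mat_delete (mat_delete M i j) k l)"
      by (simp add: map_mat_delete hC smult_mat_delete)
    also have "\<dots> = (-1)^(n-2) * det (mat_delete (mat_delete M i j) k l)" using M by (simp add: numeral_2_eq_2)
    finally show ?thesis .
  qed
  have key0: "h (det CM) = (-1)^n * det M"
  proof -
    have "h (det CM) = det (map_mat h CM)" by (rule comm_ring_hom.hom_det[OF hom, symmetric])
    also have "\<dots> = (-1)^n * det M" using M by (simp add: hC)
    finally show ?thesis .
  qed
  have hd: "h (p * q - r * s) = h p * h q - h r * h s" "h (p * q) = h p * h q" for p q r s
    by (simp_all add: h_def)
  let ?X = "det (mat_delete (mat_delete M (n-1) (n-1)) (n-2) (n-2))"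
  let ?A = "det (mat_delete M (n-2) (n-2))"
  let ?B = "det (mat_delete M (n-1) (n-1))"
  let ?C = "det (mat_delete M (n-2) (n-1))"
  let ?D = "det (mat_delete M (n-1) (n-2))"
  let ?s1 = "(-1::'a)^n" let ?s2 = "(-1::'a)^(n-2)" let ?s3 = "(-1::'a)^(n-1)"
  from arg_cong[OF dj, of h] have H:
    "?s1 * det M * (?s2 * ?X) = (?s3 * ?A) * (?s3 * ?B) - (?s3 * ?C) * (?s3 * ?D)"
    unfolding hd key key2 key0 .
  have e1: "?s1 * ?s2 = 1"
  proof -
    have "?s1 * ?s2 = (-1)^(n + (n-2))" by (simp add: power_add)
    also have "n + (n-2) = 2 * (n-1)" using n by simp
    finally show ?thesis by (simp add: power_mult)
  qed
  have e2: "?s3 * ?s3 = 1"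
  proof -
    have "?s3 * ?s3 = (-1)^(2*(n-1))" by (simp add: power_add mult_2)
    then show ?thesis by (simp add: power_mult)
  qed
  have l: "?s1 * det M * (?s2 * ?X) = (?s1 * ?s2) * (det M * ?X)" by (simp only: ac_simps)
  have r: "(?s3 * ?A) * (?s3 * ?B) - (?s3 * ?C) * (?s3 * ?D) = (?s3 * ?s3) * (?A * ?B - ?C * ?D)"
    by (simp only: algebra_simps)
  show ?thesis using H unfolding l r e1 e2 by simp
qed

definition Wm :: "nat \<Rightarrow> (nat \<Rightarrow> int) \<Rightarrow> (nat \<Rightarrow> int) \<Rightarrow> real poly mat" where
  "Wm k rs cs = mat k k (\<lambda>(i,j). Pi (cs j - rs i))"

definition W :: "nat \<Rightarrow> (nat \<Rightarrow> int) \<Rightarrow> (nat \<Rightarrow> int) \<Rightarrow> real poly" where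
  "W k rs cs = det (Wm k rs cs)"

definition SS :: "int \<Rightarrow> nat \<Rightarrow> (nat \<Rightarrow> int) \<Rightarrow> (nat \<Rightarrow> int) \<Rightarrow> real poly" where
  "SS s k rs cs = (\<Sum>i\<in>{0..<k}. W k (rs(i := rs i + s)) cs)"

lemma Wm_carrier[simp]: "Wm k rs cs \<in> carrier_mat k k" by (simp add: Wm_def)

lemma W_cong: "(\<And>i. i < k \<Longrightarrow> rs i = rs' i) \<Longrightarrow> (\<And>j. j < k \<Longrightarrow> cs j = cs' j) \<Longrightarrow> W k rs cs = W k rs' cs'"
  unfolding W_def by (rule arg_cong[of _ _ det], rule eq_matI) (auto simp: Wm_def)

lemma RS_shift: "RS k (Wm k rs cs) (\<lambda>r j. Pi (cs j - rs r - s)) = SS s k rs cs"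
  unfolding RS_def SS_def W_def
  by (intro sum.cong refl arg_cong[of _ _ det] eq_matI) (auto simp: rowrep_def Wm_def algebra_simps)

lemma pderiv_W: "pderiv (W k rs cs) = SS 1 k rs cs"
proof -
  have "pderiv (W k rs cs) = RS k (Wm k rs cs) (\<lambda>i j. pderiv (Wm k rs cs $$ (i,j)))"
    unfolding W_def by (rule pderiv_det) simp
  also have "\<dots> = RS k (Wm k rs cs) (\<lambda>r j. Pi (cs j - rs r - 1))"
    unfolding RS_def by (intro sum.cong refl arg_cong[of _ _ det] eq_matI) (auto simp: rowrep_def Wm_def pderiv_Pi)
  finally show ?thesis by (simp add: RS_shift)
qed

lemma Pi_rec': "of_int c * Pi (c - r) = of_int r * Pi (c - r) + [:0,1:] * Pi (c - r - 1) + [:1/3:] * Pi (c - r - 2)"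
proof -
  have "Polynomial.smult (of_int (c - r)) (Pi (c - r)) = [:0,1:] * Pi (c - r - 1) + Polynomial.smult (1/3) (Pi (c - r - 2))"
    using Pi_rec[of "c - r"] by simp
  moreover have "Polynomial.smult (of_int c) (Pi (c - r)) = Polynomial.smult (of_int r) (Pi (c - r)) + Polynomial.smult (of_int (c - r)) (Pi (c - r))"
    by (simp add: smult_add_left[symmetric])
  ultimately show ?thesis by (simp add: of_int_poly add.assoc)
qed

lemma SS2_W: "SS 2 k rs cs = [:3:] * ((of_int ((\<Sum>j\<in>{0..<k}. cs j) - (\<Sum>i\<in>{0..<k}. rs i))) * W k rs cs - [:0,1:] * pderiv (W k rs cs))"
proof -
  let ?A = "Wm k rs cs"
  have A: "?A \<in> carrier_mat k k" by simp
  have "(\<Sum>j\<in>{0..<k}. of_int (cs j)) * W k rs cs = RS k ?A (\<lambda>i j. of_int (cs j) * ?A $$ (i,j))"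
    unfolding W_def by (rule RS_diag[symmetric]) simp
  also have "\<dots> = RS k ?A (\<lambda>i j. of_int (rs i) * ?A $$ (i,j) + ([:0,1:] * Pi (cs j - rs i - 1) + [:1/3:] * Pi (cs j - rs i - 2)))"
    unfolding RS_def
    by (intro sum.cong refl arg_cong[of _ _ det] eq_matI) (auto simp: rowrep_def Wm_def Pi_rec' algebra_simps)
  also have "\<dots> = (\<Sum>i\<in>{0..<k}. of_int (rs i)) * W k rs cs + ([:0,1:] * SS 1 k rs cs + [:1/3:] * SS 2 k rs cs)"
    unfolding RS_add[OF A] RS_scal[OF A] RS_rowscal[OF A] RS_shift W_def[symmetric] by simp
  finally have "(\<Sum>j\<in>{0..<k}. of_int (cs j)) * W k rs cs = (\<Sum>i\<in>{0..<k}. of_int (rs i)) * W k rs cs + ([:0,1:] * pderiv (W k rs cs) + [:1/3:] * SS 2 k rs cs)"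
    by (simp add: pderiv_W)
  then have "[:3:] * ([:1/3:] * SS 2 k rs cs) = [:3:] * ((\<Sum>j\<in>{0..<k}. of_int (cs j)) * W k rs cs - (\<Sum>i\<in>{0..<k}. of_int (rs i)) * W k rs cs - [:0,1:] * pderiv (W k rs cs))"
    by (simp add: algebra_simps)
  moreover have "[:3:] * ([:1/3:] * q) = (q :: real poly)" for q
    by (simp add: mult.assoc[symmetric])
  ultimately show ?thesis by (simp add: algebra_simps of_int_sum)
qed

lemma W_dup: assumes "a < k" "b < k" "a \<noteq> b" "rs a = rs b" shows "W k rs cs = 0"
  unfolding W_def
  by (rule det_identical_rows[OF Wm_carrier assms(3,1,2)]) (rule eq_vecI, use assms in \<open>auto simp: Wm_def\<close>)

lemma W_swap: assumes "a < k" "b < k" "a \<noteq> b"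
  shows "W k (rs(a := rs b, b := rs a)) cs = - W k rs cs"
proof -
  have "Wm k (rs(a := rs b, b := rs a)) cs = swaprows a b (Wm k rs cs)"
    by (rule eq_matI) (use assms in \<open>auto simp: Wm_def mat_swaprows_def\<close>)
  then show ?thesis unfolding W_def using det_swaprows[OF assms(1,2,3) Wm_carrier] by simp
qed

definition R0 :: "nat \<Rightarrow> int" where "R0 = (\<lambda>i. int i)"
definition R1 :: "nat \<Rightarrow> int \<Rightarrow> nat \<Rightarrow> int" where
  "R1 k a = (\<lambda>i. if i + 1 < k then int i else a)"
definition R2 :: "nat \<Rightarrow> int \<Rightarrow> int \<Rightarrow> nat \<Rightarrow> int" where
  "R2 k a b = (\<lambda>i. if i + 2 < k then int i else if i + 2 = k then a else b)"

lemma SS_split2: "SS s (j+2) rs cs = (\<Sum>i\<in>{0..<j}. W (j+2) (rs(i:=rs i+s)) cs)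
   + W (j+2) (rs(j := rs j + s)) cs + W (j+2) (rs(j+1 := rs (j+1) + s)) cs"
  by (simp add: SS_def numeral_2_eq_2)

lemma SS_one: "SS s 1 rs cs = W 1 (rs(0 := rs 0 + s)) cs"
  by (simp add: SS_def)

lemma S1_R0: assumes "k \<ge> 1" shows "SS 1 k R0 cs = W k (R1 k (int k)) cs"
proof -
  obtain j where k: "k = j + 1" using assms by (metis add.commute le_add_diff_inverse)
  have "SS 1 k R0 cs = (\<Sum>i\<in>{0..<j}. W k (R0(i := R0 i + 1)) cs) + W k (R0(j := R0 j + 1)) cs"
    by (simp add: SS_def k)
  also have "(\<Sum>i\<in>{0..<j}. W k (R0(i := R0 i + 1)) cs) = 0"
    proof (rule sum.neutral, intro ballI)
    fix i assume "i \<in> {0..<j}"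
    then show "W k (R0(i := R0 i + 1)) cs = 0" by (intro W_dup[of i _ "Suc i"]) (auto simp: k R0_def)
  qed
  also have "W k (R0(j := R0 j + 1)) cs = W k (R1 k (int k)) cs"
    by (rule W_cong) (auto simp: R0_def R1_def k)
  finally show ?thesis by simp
qed

lemma S1_R1: assumes "k \<ge> 1"
  shows "SS 1 k (R1 k (int k)) cs = W k (R1 k (int k + 1)) cs + (if k \<ge> 2 then W k (R2 k (int k - 1) (int k)) cs else 0)"
proof (cases "k = 1")
  case True
  show ?thesis unfolding True SS_one by (simp, rule W_cong) (auto simp: R1_def)
next
  case False
  then obtain j where k: "k = j + 2" using assms by (metis add.commute le_add_diff_inverse le_antisym one_add_one not_less_eq_eq plus_1_eq_Suc)
  have "(\<Sum>i\<in>{0..<j}. W (j+2) ((R1 k (int k))(i := R1 k (int k) i + 1)) cs) = 0"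
    proof (rule sum.neutral, intro ballI)
    fix i assume "i \<in> {0..<j}"
    then show "W (j+2) ((R1 k (int k))(i := R1 k (int k) i + 1)) cs = 0" by (intro W_dup[of i _ "Suc i"]) (auto simp: k R1_def)
  qed
  moreover have "W (j+2) ((R1 k (int k))(j := R1 k (int k) j + 1)) cs = W (j+2) (R2 k (int k - 1) (int k)) cs"
    by (rule W_cong) (auto simp: R1_def R2_def k)
  moreover have "W (j+2) ((R1 k (int k))(j+1 := R1 k (int k) (j+1) + 1)) cs = W (j+2) (R1 k (int k + 1)) cs"
    by (rule W_cong) (auto simp: R1_def k)
  ultimately show ?thesis unfolding k SS_split2 using k by simp
qed

lemma S2_R0: assumes "k \<ge> 1"
  shows "SS 2 k R0 cs = W k (R1 k (int k + 1)) cs - (if k \<ge> 2 then W k (R2 k (int k - 1) (int k)) cs else 0)"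
proof (cases "k = 1")
  case True
  show ?thesis unfolding True SS_one by (simp, rule W_cong) (auto simp: R0_def R1_def)
next
  case False
  then obtain j where k: "k = j + 2" using assms by (metis add.commute le_add_diff_inverse le_antisym one_add_one not_less_eq_eq plus_1_eq_Suc)
  have "(\<Sum>i\<in>{0..<j}. W (j+2) (R0(i := R0 i + 2)) cs) = 0"
    proof (rule sum.neutral, intro ballI)
    fix i assume "i \<in> {0..<j}"
    then show "W (j+2) (R0(i := R0 i + 2)) cs = 0" by (intro W_dup[of i _ "Suc (Suc i)"]) (auto simp: k R0_def)
  qed
  moreover have "W (j+2) (R0(j := R0 j + 2)) cs = - W (j+2) (R2 k (int k - 1) (int k)) cs"
  proof -
    let ?rs = "R0(j := R0 j + 2)"
    have "W (j+2) (?rs(j := ?rs (j+1), j+1 := ?rs j)) cs = - W (j+2) ?rs cs"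
      by (rule W_swap) auto
    moreover have "W (j+2) (?rs(j := ?rs (j+1), j+1 := ?rs j)) cs = W (j+2) (R2 k (int k - 1) (int k)) cs"
      by (rule W_cong) (auto simp: R0_def R2_def k)
    ultimately show ?thesis by simp
  qed
  moreover have "W (j+2) (R0(j+1 := R0 (j+1) + 2)) cs = W (j+2) (R1 k (int k + 1)) cs"
    by (rule W_cong) (auto simp: R0_def R1_def k)
  ultimately show ?thesis unfolding k SS_split2 using k by simp
qed

lemma laplace_unit_col:
  fixes A :: "'a::comm_ring_1 mat"
  assumes A: "A \<in> carrier_mat n n" and c: "c < n" and r: "r < n"
    and col: "\<And>i. i < n \<Longrightarrow> A $$ (i,c) = (if i = r then 1 else 0)"
  shows "det A = (-1)^(r+c) * det (mat_delete A r c)"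
proof -
  have "det A = (\<Sum>i<n. A $$ (i,c) * cofactor A i c)" by (rule laplace_expansion_column[OF A c])
  also have "\<dots> = (\<Sum>i<n. (if i = r then cofactor A i c else 0))"
    by (intro sum.cong) (auto simp: col)
  also have "\<dots> = cofactor A r c" using r by simp
  finally show ?thesis by (simp add: cofactor_def)
qed

definition NN :: "nat \<Rightarrow> (nat \<Rightarrow> int) \<Rightarrow> real poly mat" where
  "NN k cs = mat (k+2) (k+2) (\<lambda>(i,j). if j \<le> k then Pi (cs j - int i) else (if i = k - 1 then 1 else 0))"

lemma P3:
  assumes k: "k \<ge> 1"
  shows "W k (R1 k (int k + 1)) cs * W (k+1) R0 cs - W k (R1 k (int k)) cs * W (k+1) (R1 (k+1) (int k + 1)) cs
         + W k R0 cs * W (k+1) (R2 (k+1) (int k) (int k + 1)) cs = 0"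
proof -
  let ?N = "NN k cs"
  have Nc: "?N \<in> carrier_mat (k+2) (k+2)" by (simp add: NN_def)
  have dj: "det ?N * det (mat_delete (mat_delete ?N (k+1) (k+1)) k k) =
    det (mat_delete ?N k k) * det (mat_delete ?N (k+1) (k+1))
    - det (mat_delete ?N k (k+1)) * det (mat_delete ?N (k+1) k)"
    using DJ[OF Nc] by simp
  have N1: "mat_delete ?N (k+1) (k+1) = Wm (k+1) R0 cs"
    by (rule eq_matI) (auto simp: mat_delete_def NN_def Wm_def R0_def)
  have N2: "mat_delete (mat_delete ?N (k+1) (k+1)) k k = Wm k R0 cs"
    unfolding N1 by (rule eq_matI) (auto simp: mat_delete_def Wm_def R0_def)
  have N3: "mat_delete ?N k (k+1) = Wm (k+1) (R1 (k+1) (int k + 1)) cs"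
    by (rule eq_matI) (auto simp: mat_delete_def NN_def Wm_def R1_def less_Suc_eq intro!: arg_cong[where f=Pi])
  have N4: "det ?N = W (k+1) (R2 (k+1) (int k) (int k + 1)) cs"
  proof -
    have "det ?N = (-1)^((k-1)+(k+1)) * det (mat_delete ?N (k-1) (k+1))"
      by (rule laplace_unit_col[OF Nc]) (use k in \<open>auto simp: NN_def\<close>)
    also have "(k-1)+(k+1) = 2 * k" using k by simp
    also have "mat_delete ?N (k-1) (k+1) = Wm (k+1) (R2 (k+1) (int k) (int k + 1)) cs"
      by (rule eq_matI) (use k in \<open>auto simp: mat_delete_def NN_def Wm_def R2_def intro!: arg_cong[where f=Pi]\<close>)
    finally show ?thesis by (simp add: W_def power_mult)
  qed
  have N5: "det (mat_delete ?N k k) = - W k (R1 k (int k + 1)) cs"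
  proof -
    let ?B = "mat_delete ?N k k"
    have Bc: "?B \<in> carrier_mat (k+1) (k+1)" using mat_delete_carrier[OF Nc] by simp
    have "det ?B = (-1)^((k-1)+k) * det (mat_delete ?B (k-1) k)"
      by (rule laplace_unit_col[OF Bc]) (use k in \<open>auto simp: NN_def mat_delete_def\<close>)
    also have "(k-1)+k = 2 * (k - 1) + 1" using k by simp
    also have "mat_delete ?B (k-1) k = Wm k (R1 k (int k + 1)) cs"
      by (rule eq_matI) (use k in \<open>auto simp: mat_delete_def NN_def Wm_def R1_def intro!: arg_cong[where f=Pi]\<close>)
    finally show ?thesis by (simp add: W_def power_mult)
  qed
  have N6: "det (mat_delete ?N (k+1) k) = - W k (R1 k (int k)) cs"
  proof -
    let ?B = "mat_delete ?N (k+1) k"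
    have Bc: "?B \<in> carrier_mat (k+1) (k+1)" using mat_delete_carrier[OF Nc] by simp
    have "det ?B = (-1)^((k-1)+k) * det (mat_delete ?B (k-1) k)"
      by (rule laplace_unit_col[OF Bc]) (use k in \<open>auto simp: NN_def mat_delete_def\<close>)
    also have "(k-1)+k = 2 * (k - 1) + 1" using k by simp
    also have "mat_delete ?B (k-1) k = Wm k (R1 k (int k)) cs"
      by (rule eq_matI) (use k in \<open>auto simp: mat_delete_def NN_def Wm_def R1_def intro!: arg_cong[where f=Pi]\<close>)
    finally show ?thesis by (simp add: W_def power_mult)
  qed
  have N2': "mat_delete (Wm (k+1) R0 cs) k k = Wm k R0 cs" using N2 N1 by simp
  from dj show ?thesis unfolding N1 N2' N3 N4 N5 N6 W_def[symmetric] by (simp add: algebra_simps)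
qed

lemma mKP:
  assumes k: "k \<ge> 1"
  shows "pderiv (pderiv (W k R0 cs)) * W (k+1) R0 cs - 2 * pderiv (W k R0 cs) * pderiv (W (k+1) R0 cs)
    + W k R0 cs * pderiv (pderiv (W (k+1) R0 cs)) + (SS 2 k R0 cs * W (k+1) R0 cs - W k R0 cs * SS 2 (k+1) R0 cs) = 0"
proof -
  define a where "a = (if k \<ge> 2 then W k (R2 k (int k - 1) (int k)) cs else 0)"
  have d1: "pderiv (W k R0 cs) = W k (R1 k (int k)) cs" using pderiv_W S1_R0[OF k] by simp
  have d2: "pderiv (W k (R1 k (int k)) cs) = W k (R1 k (int k + 1)) cs + a"
    using pderiv_W[of k "R1 k (int k)" cs] S1_R1[OF k, of cs] by (simp add: a_def)
  have s2: "SS 2 k R0 cs = W k (R1 k (int k + 1)) cs - a" unfolding S2_R0[OF k] a_def ..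
  have k1: "k + 1 \<ge> 1" "k + 1 \<ge> 2" using k by auto
  have e1: "pderiv (W (k+1) R0 cs) = W (k+1) (R1 (k+1) (int k + 1)) cs"
    using pderiv_W S1_R0[OF k1(1)] by (simp add: add.commute)
  have e2: "pderiv (W (k+1) (R1 (k+1) (int k + 1)) cs) = W (k+1) (R1 (k+1) (int k + 2)) cs + W (k+1) (R2 (k+1) (int k) (int k + 1)) cs"
    using pderiv_W[of "k+1" "R1 (k+1) (int (k+1))" cs] S1_R1[OF k1(1), of cs] k1 by (simp add: add.commute)
  have t2: "SS 2 (k+1) R0 cs = W (k+1) (R1 (k+1) (int k + 2)) cs - W (k+1) (R2 (k+1) (int k) (int k + 1)) cs"
    using S2_R0[OF k1(1), of cs] k1 by (simp add: add.commute)
  have "pderiv (pderiv (W k R0 cs)) * W (k+1) R0 cs - 2 * pderiv (W k R0 cs) * pderiv (W (k+1) R0 cs)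
    + W k R0 cs * pderiv (pderiv (W (k+1) R0 cs)) + (SS 2 k R0 cs * W (k+1) R0 cs - W k R0 cs * SS 2 (k+1) R0 cs)
    = 2 * (W k (R1 k (int k + 1)) cs * W (k+1) R0 cs - W k (R1 k (int k)) cs * W (k+1) (R1 (k+1) (int k + 1)) cs
         + W k R0 cs * W (k+1) (R2 (k+1) (int k) (int k + 1)) cs)"
    unfolding d1 e1 d2 s2 e2 t2 by (simp add: algebra_simps)
  also have "\<dots> = 0" using P3[OF k, of cs] by simp
  finally show ?thesis .
qed

lemma sumR0: "(\<Sum>i\<in>{0..<k}. R0 i) = (\<Sum>i\<in>{0..<k}. int i)" by (simp add: R0_def)

lemma E_eq:
  shows "pderiv (pderiv (W k R0 cs)) * W (k+1) R0 cs - 2 * pderiv (W k R0 cs) * pderiv (W (k+1) R0 cs)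
    + W k R0 cs * pderiv (pderiv (W (k+1) R0 cs))
    - [:3:] * [:0,1:] * (pderiv (W k R0 cs) * W (k+1) R0 cs - W k R0 cs * pderiv (W (k+1) R0 cs))
    + [:3:] * of_int (int k - cs k) * W k R0 cs * W (k+1) R0 cs = 0"
proof (cases "k = 0")
  case True
  have t: "W 0 R0 cs = 1" unfolding W_def by (rule det_dim_zero) simp
  have r: "W (Suc 0) R0 cs = Pi (cs 0)" unfolding W_def by (subst det_single) (auto simp: Wm_def R0_def)
  have rec: "of_int (cs 0) * Pi (cs 0) = [:0,1:] * Pi (cs 0 - 1) + [:1/3:] * Pi (cs 0 - 2)"
    using Pi_rec'[of "cs 0" 0] by simp
  have "[:3:] * (of_int (cs 0) * Pi (cs 0)) = [:3:] * [:0,1:] * Pi (cs 0 - 1) + Pi (cs 0 - 2)"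
    unfolding rec by (simp add: algebra_simps)
  then show ?thesis using True t r by (simp add: pderiv_Pi algebra_simps)
next
  case False
  then have k: "k \<ge> 1" by simp
  let ?t = "W k R0 cs" and ?r = "W (k+1) R0 cs"
  define St where "St = (\<Sum>j\<in>{0..<k}. cs j) - (\<Sum>i\<in>{0..<k}. R0 i)"
  have Sr: "(\<Sum>j\<in>{0..<k+1}. cs j) - (\<Sum>i\<in>{0..<k+1}. R0 i) = St + cs k - int k"
    by (simp add: St_def R0_def)
  have a: "SS 2 k R0 cs = [:3:] * (of_int St * ?t - [:0,1:] * pderiv ?t)"
    unfolding SS2_W St_def ..
  have b: "SS 2 (k+1) R0 cs = [:3:] * (of_int (St + cs k - int k) * ?r - [:0,1:] * pderiv ?r)"
    unfolding SS2_W Sr ..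
  have hD: "SS 2 k R0 cs * ?r - ?t * SS 2 (k+1) R0 cs =
     - [:3:] * [:0,1:] * (pderiv ?t * ?r - ?t * pderiv ?r) + [:3:] * of_int (int k - cs k) * ?t * ?r"
    unfolding a b by (simp add: algebra_simps)
  have m: "pderiv (pderiv ?t) * ?r - 2 * pderiv ?t * pderiv ?r + ?t * pderiv (pderiv ?r)
     + (- [:3:] * [:0,1:] * (pderiv ?t * ?r - ?t * pderiv ?r) + [:3:] * of_int (int k - cs k) * ?t * ?r) = 0"
    using mKP[OF k, of cs] unfolding hD .
  have "pderiv (pderiv ?t) * ?r - 2 * pderiv ?t * pderiv ?r + ?t * pderiv (pderiv ?r)
    - [:3:] * [:0,1:] * (pderiv ?t * ?r - ?t * pderiv ?r)
    + [:3:] * of_int (int k - cs k) * ?t * ?r =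
    pderiv (pderiv ?t) * ?r - 2 * pderiv ?t * pderiv ?r + ?t * pderiv (pderiv ?r)
     + (- [:3:] * [:0,1:] * (pderiv ?t * ?r - ?t * pderiv ?r) + [:3:] * of_int (int k - cs k) * ?t * ?r)"
    by (simp only: diff_conv_add_uminus add.assoc mult_minus_left)
  then show ?thesis using m by (rule trans)
qed

definition H :: "nat \<Rightarrow> nat \<Rightarrow> real poly" where
  "H m n = W m R0 (\<lambda>j. int n + int j)"

lemma pint_poly: "pint (tt x) k = poly (Pi k) x"
  by (simp add: pint_def Pi_def poly_P)

lemma hmn_fun: "hmn m n = (\<lambda>x. poly (H m n) x)"
proof
  fix x
  have hm: "hmn m n x = schur (rect n m) (tt x)" unfolding hmn_def tt_def ..
  show "hmn m n x = poly (H m n) x"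
  proof (cases "n = 0")
    case True
    have "H m n = 1"
    proof -
      have ut: "upper_triangular (Wm m R0 (\<lambda>j. int n + int j))"
        by (auto simp: upper_triangular_def Wm_def R0_def True)
      have "H m n = prod_list (diag_mat (Wm m R0 (\<lambda>j. int n + int j)))"
        unfolding H_def W_def by (rule det_upper_triangular[OF ut Wm_carrier])
      also have "\<dots> = 1" unfolding prod_list_diag_prod
        by (rule prod.neutral) (auto simp: Wm_def R0_def True Pi_def)
      finally show ?thesis .
    qed
    then show ?thesis by (simp add: hmn_def True rect_def schur_def)
  next
    case False
    have hom: "comm_ring_hom (\<lambda>p::real poly. poly p x)" by unfold_locales auto
    have "poly (H m n) x = det (map_mat (\<lambda>p. poly p x) (Wm m R0 (\<lambda>j. int n + int j)))"
      unfolding H_def W_def by (rule comm_ring_hom.hom_det[OF hom, symmetric])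
    also have "map_mat (\<lambda>p. poly p x) (Wm m R0 (\<lambda>j. int n + int j)) =
       mat (length (rect n m)) (length (rect n m)) (\<lambda>(i, j). pint (tt x) (int (rect n m ! i) - int i + int j))"
      by (rule eq_matI) (auto simp: Wm_def R0_def rect_def False pint_poly algebra_simps)
    finally show ?thesis by (simp add: hm schur_def)
  qed
qed

lemma deriv_poly_fun: "deriv (\<lambda>x. poly p x) = (\<lambda>x. poly (pderiv p) x)"
  by (rule ext, rule DERIV_imp_deriv, rule poly_DERIV)

definition EQ :: "real poly \<Rightarrow> real poly \<Rightarrow> int \<Rightarrow> bool" where
  "EQ T R c \<longleftrightarrow> pderiv (pderiv T) * R - 2 * pderiv T * pderiv R + T * pderiv (pderiv R)
    - [:3:] * [:0,1:] * (pderiv T * R - T * pderiv R) + [:3:] * of_int c * T * R = 0"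

lemma EQ_W: "EQ (W k R0 cs) (W (k+1) R0 cs) (int k - cs k)"
  unfolding EQ_def by (rule E_eq)

lemma EQ_smult: assumes "EQ T R c" shows "EQ T (Polynomial.smult s R) c"
proof -
  have "pderiv (pderiv T) * Polynomial.smult s R - 2 * pderiv T * pderiv (Polynomial.smult s R) + T * pderiv (pderiv (Polynomial.smult s R))
    - [:3:] * [:0,1:] * (pderiv T * Polynomial.smult s R - T * pderiv (Polynomial.smult s R)) + [:3:] * of_int c * T * Polynomial.smult s R
    = Polynomial.smult s (pderiv (pderiv T) * R - 2 * pderiv T * pderiv R + T * pderiv (pderiv R)
    - [:3:] * [:0,1:] * (pderiv T * R - T * pderiv R) + [:3:] * of_int c * T * R)"
    by (simp add: pderiv_smult smult_add_right smult_diff_right mult.commute)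
  then show ?thesis using assms unfolding EQ_def by simp
qed

lemma EQ_eval: assumes "EQ T R c"
  shows "hirD2 (\<lambda>y. poly T y) (\<lambda>y. poly R y) x - 3 * x * hirD (\<lambda>y. poly T y) (\<lambda>y. poly R y) x
     + 3 * real_of_int c * poly T x * poly R x = 0"
proof -
  from arg_cong[OF assms[unfolded EQ_def], of "\<lambda>p. poly p x"]
  show ?thesis unfolding hirD2_def hirD_def deriv_poly_fun
    by (simp add: algebra_simps)
qed

lemma col_rot:
  assumes "\<And>j. j < m \<Longrightarrow> cs' (Suc j) = cs j" "cs' 0 = cs m"
  shows "W (m+1) R0 cs' = (-1)^m * W (m+1) R0 cs"
proof -
  have A: "Wm (m+1) R0 cs \<in> carrier_mat (m+1) (m+1)" by simp
  have S: "swap_col_to_front (Wm (m+1) R0 cs) m = mat (m+1) (m+1) (\<lambda>(i,j). if j = 0 then (Wm (m+1) R0 cs) $$ (i,m)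
    else if j \<le> m then (Wm (m+1) R0 cs) $$ (i, j-1) else (Wm (m+1) R0 cs) $$ (i,j))"
    by (rule swap_col_to_front_result[OF A]) simp
  have "Wm (m+1) R0 cs' = swap_col_to_front (Wm (m+1) R0 cs) m"
    unfolding S
  proof (rule eq_matI)
    fix i j assume i: "i < dim_row (mat (m+1) (m+1) (\<lambda>(i,j). if j = 0 then (Wm (m+1) R0 cs) $$ (i,m)
    else if j \<le> m then (Wm (m+1) R0 cs) $$ (i, j-1) else (Wm (m+1) R0 cs) $$ (i,j)))"
      and j: "j < dim_col (mat (m+1) (m+1) (\<lambda>(i,j). if j = 0 then (Wm (m+1) R0 cs) $$ (i,m)
    else if j \<le> m then (Wm (m+1) R0 cs) $$ (i, j-1) else (Wm (m+1) R0 cs) $$ (i,j)))"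
    then have i': "i < m+1" "j < m+1" by auto
    show "Wm (m+1) R0 cs' $$ (i,j) = mat (m+1) (m+1) (\<lambda>(i,j). if j = 0 then (Wm (m+1) R0 cs) $$ (i,m)
    else if j \<le> m then (Wm (m+1) R0 cs) $$ (i, j-1) else (Wm (m+1) R0 cs) $$ (i,j)) $$ (i,j)"
    proof (cases j)
      case 0 then show ?thesis using i' by (simp add: Wm_def assms)
    next
      case (Suc j') then show ?thesis using i' by (simp add: Wm_def assms)
    qed
  qed (auto simp: Wm_def)
  then show ?thesis unfolding W_def using swap_col_to_front_det[OF A, of m] by simp
qed

lemma laplace_first:
  "W (m+1) R0 (\<lambda>j. if j = 0 then 0 else int n + int j) = W m R0 (\<lambda>j. int n + int j)"
proof -
  let ?A = "Wm (m+1) R0 (\<lambda>j. if j = 0 then 0 else int n + int j)"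
  have "det ?A = (-1)^(0+0) * det (mat_delete ?A 0 0)"
    by (rule laplace_unit_col[OF Wm_carrier]) (auto simp: Wm_def R0_def Pi_def)
  also have "mat_delete ?A 0 0 = Wm m R0 (\<lambda>j. int n + int j)"
    by (rule eq_matI) (auto simp: mat_delete_def Wm_def R0_def intro!: arg_cong[where f=Pi])
  finally show ?thesis by (simp add: W_def)
qed

lemma neg1_pow_mult: "(-1::real poly)^m * p = Polynomial.smult ((-1)^m) p"
  by (induction m) auto

lemma H_eqs:
  "EQ (H m n) (H (m+1) n) (- int n)"
  "EQ (H m (n+1)) (H (m+1) n) (int m - int n)"
  "EQ (H m (n+1)) (H m n) (int m)"
proof -
  show "EQ (H m n) (H (m+1) n) (- int n)"
    using EQ_W[of m "\<lambda>j. int n + int j"] by (simp add: H_def)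
next
  define cs2 where "cs2 = (\<lambda>j. if j < m then int n + 1 + int j else int n)"
  have a: "W m R0 cs2 = H m (n+1)" unfolding H_def by (rule W_cong) (auto simp: cs2_def)
  have b: "H (m+1) n = (-1)^m * W (m+1) R0 cs2" unfolding H_def by (rule col_rot) (auto simp: cs2_def)
  have "EQ (W m R0 cs2) (Polynomial.smult ((-1)^m) (W (m+1) R0 cs2)) (int m - cs2 m)"
    by (rule EQ_smult[OF EQ_W])
  moreover have "Polynomial.smult ((-1)^m) (W (m+1) R0 cs2) = H (m+1) n"
    unfolding b by (rule neg1_pow_mult[symmetric])
  ultimately show "EQ (H m (n+1)) (H (m+1) n) (int m - int n)" using a by (simp add: cs2_def)
next
  define cs3 where "cs3 = (\<lambda>j. if j < m then int n + 1 + int j else 0)"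
  have a: "W m R0 cs3 = H m (n+1)" unfolding H_def by (rule W_cong) (auto simp: cs3_def)
  have b: "H m n = (-1)^m * W (m+1) R0 cs3"
    unfolding H_def laplace_first[symmetric] by (rule col_rot) (auto simp: cs3_def)
  have "EQ (W m R0 cs3) (Polynomial.smult ((-1)^m) (W (m+1) R0 cs3)) (int m - cs3 m)"
    by (rule EQ_smult[OF EQ_W])
  moreover have "Polynomial.smult ((-1)^m) (W (m+1) R0 cs3) = H m n"
    unfolding b by (rule neg1_pow_mult[symmetric])
  ultimately show "EQ (H m (n+1)) (H m n) (int m)" using a by (simp add: cs3_def)
qed

theorem lemma5p7:
  fixes m n :: nat and x :: real
  shows "(hirD2 (hmn m (n+1)) (hmn m n) x - 3 * x * hirD (hmn m (n+1)) (hmn m n) x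
           + 3 * real m * hmn m (n+1) x * hmn m n x = 0) \<and>
         (hirD2 (hmn m (n+1)) (hmn (m+1) n) x - 3 * x * hirD (hmn m (n+1)) (hmn (m+1) n) x
           + 3 * (real m - real n) * hmn m (n+1) x * hmn (m+1) n x = 0) \<and>
         (hirD2 (hmn m n) (hmn (m+1) n) x - 3 * x * hirD (hmn m n) (hmn (m+1) n) x
           - 3 * real n * hmn m n x * hmn (m+1) n x = 0)"
proof (intro conjI)
  show "hirD2 (hmn m (n+1)) (hmn m n) x - 3 * x * hirD (hmn m (n+1)) (hmn m n) x
           + 3 * real m * hmn m (n+1) x * hmn m n x = 0"
    using EQ_eval[OF H_eqs(3), where x=x] unfolding hmn_fun by simp
  show "hirD2 (hmn m (n+1)) (hmn (m+1) n) x - 3 * x * hirD (hmn m (n+1)) (hmn (m+1) n) x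
           + 3 * (real m - real n) * hmn m (n+1) x * hmn (m+1) n x = 0"
    using EQ_eval[OF H_eqs(2), where x=x] unfolding hmn_fun by simp
  show "hirD2 (hmn m n) (hmn (m+1) n) x - 3 * x * hirD (hmn m n) (hmn (m+1) n) x
           - 3 * real n * hmn m n x * hmn (m+1) n x = 0"
    using EQ_eval[OF H_eqs(1), where x=x] unfolding hmn_fun by simp
qed

end
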